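(* In the setting of the sensorless induction machine (scaled model with state $(\tilde i_{s\alpha},\tilde i_{s\beta},\tilde\psi_{r\alpha},\tilde\psi_{r\beta},\omega_e,T_r)$, output $\tilde{\mathcal{I}}_s$, and $6\times6$ observability matrix $\mathcal{O}(x)$ formed from the gradients of $\tilde{\mathcal{I}}_s$, $\mathcal{L}_f\tilde{\mathcal{I}}_s$, $\mathcal{L}_f^2\tilde{\mathcal{I}}_s$), assume the rotor flux $\Psi_r=(\psi_{r\alpha},\psi_{r\beta})$ is nonzero and let $\omega_s=\frac{d}{dt}\angle\Psi_r=\frac{d}{dt}\arctan\frac{\psi_{r\beta}}{\psi_{r\alpha}}$ be the angular velocity of the rotor flux vector (along the model). Then $\det\mathcal{O}(x)\neq0$ if and only if $$\frac{d}{dt}\arctan(\tau_r\omega_e)+\omega_s\neq0 .$$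
   Context: Scaled model: $\dot{\tilde{\mathcal{I}}}_s=\mathcal{V}_s+a\tilde{\mathcal{I}}_s+\gamma\tilde\Psi_r$, $\dot{\tilde\Psi}_r=-\gamma\tilde\Psi_r-(a-b)\tilde{\mathcal{I}}_s$, $\dot\omega_e=\frac{c}{J}\tilde{\mathcal{I}}_s^T\mathbf{J}_2\tilde\Psi_r-\frac{p}{J}T_r$, $\dot T_r=0$, with $\gamma=\frac{1}{\tau_r}\mathbf{I}_2-\omega_e\mathbf{J}_2$, $\mathbf{J}_2=\begin{bmatrix}0&-1\\1&0\end{bmatrix}$, $a=-R_\sigma/L_\sigma$, $b=-R_s/L_\sigma$, $c=p^2/L_\sigma$, $\tau_r=L_r/R_r>0$, $\tilde\Psi_r=k_r\Psi_r$, $\tilde{\mathcal{I}}_s=L_\sigma\mathcal{I}_s$, $p,J>0$. The rows of $\mathcal{O}(x)$ are the gradients, with respect to the state, of $\tilde i_{s\alpha},\tilde i_{s\beta}$ and of their first and second Lie derivatives along the model; $\frac{d}{dt}\arctan(\tau_r\omega_e)=\frac{\tau_r\dot\omega_e}{1+\tau_r^2\omega_e^2}$. *)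

theory Defs
  imports "HOL-Analysis.Analysis"
begin

text \<open>State
  x = (i_sa, i_sb, psi_ra, psi_rb, omega_e, T_r) (all scaled quantities), encoded as
  real^6 with components x$1 .. x$6.  The input V_s = (v1, v2) is a given input
  (it does not depend on the state).  Written out componentwise:
    gamma Psi = Psi / tau_r - omega_e * J2 Psi,  J2 Psi = (-psi_rb, psi_ra),
    I_s^T J2 Psi = - i_sa * psi_rb + i_sb * psi_ra.\<close>

definition im_field ::
  "real \<Rightarrow> real \<Rightarrow> real \<Rightarrow> real \<Rightarrow> real \<Rightarrow> real \<Rightarrow> real \<Rightarrow> real \<Rightarrow> real^6 \<Rightarrow> real^6" where
  "im_field a b c tau_r p J v1 v2 x =
     (let i1 = x$1; i2 = x$2; f1 = x$3; f2 = x$4; w = x$5; T = x$6;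
          g1 = f1 / tau_r + w * f2;
          g2 = f2 / tau_r - w * f1
      in vector [ v1 + a * i1 + g1,
                  v2 + a * i2 + g2,
                  - g1 - (a - b) * i1,
                  - g2 - (a - b) * i2,
                  (c / J) * (- i1 * f2 + i2 * f1) - (p / J) * T,
                  0 ])"

definition lie_deriv :: "(real^6 \<Rightarrow> real^6) \<Rightarrow> (real^6 \<Rightarrow> real) \<Rightarrow> real^6 \<Rightarrow> real" where
  "lie_deriv F h x = frechet_derivative h (at x) (F x)"

definition grad6 :: "(real^6 \<Rightarrow> real) \<Rightarrow> real^6 \<Rightarrow> real^6" where
  "grad6 h x = (\<chi> j. frechet_derivative h (at x) (axis j 1))"

definition out1 :: "real^6 \<Rightarrow> real" where "out1 x = x$1"
definition out2 :: "real^6 \<Rightarrow> real" where "out2 x = x$2"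

definition obs_matrix :: "(real^6 \<Rightarrow> real^6) \<Rightarrow> real^6 \<Rightarrow> real^6^6" where
  "obs_matrix F x = vector
     [ grad6 out1 x,
       grad6 out2 x,
       grad6 (lie_deriv F out1) x,
       grad6 (lie_deriv F out2) x,
       grad6 (lie_deriv F (lie_deriv F out1)) x,
       grad6 (lie_deriv F (lie_deriv F out2)) x ]"

text \<open>Angular velocity of the rotor flux vector along the model:
  d/dt arctan(psi_rb / psi_ra) = (psi_ra * dpsi_rb - psi_rb * dpsi_ra) / |Psi_r|^2.\<close>

definition flux_ang_vel :: "(real^6 \<Rightarrow> real^6) \<Rightarrow> real^6 \<Rightarrow> real" where
  "flux_ang_vel F x =
     (x$3 * (F x)$4 - x$4 * (F x)$3) / ((x$3)^2 + (x$4)^2)"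

end

theory Submission
  imports Defs
begin


lemma exhaust_6:
  fixes x :: 6
  shows "x = 1 \<or> x = 2 \<or> x = 3 \<or> x = 4 \<or> x = 5 \<or> x = 6"
proof (induct x)
  case (of_int z)
  then have "z = 0 \<or> z = 1 \<or> z = 2 \<or> z = 3 \<or> z = 4 \<or> z = 5" by fastforce
  then show ?case by auto
qed

lemma UNIV_6: "UNIV = {1, 2, 3, 4, 5, 6::6}"
  using exhaust_6 by auto

lemma vector_6 [simp]:
 "(vector [x1,x2,x3,x4,x5,x6] ::('a::zero)^6)$1 = x1"
 "(vector [x1,x2,x3,x4,x5,x6] ::('a::zero)^6)$2 = x2"
 "(vector [x1,x2,x3,x4,x5,x6] ::('a::zero)^6)$3 = x3"
 "(vector [x1,x2,x3,x4,x5,x6] ::('a::zero)^6)$4 = x4"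
 "(vector [x1,x2,x3,x4,x5,x6] ::('a::zero)^6)$5 = x5"
 "(vector [x1,x2,x3,x4,x5,x6] ::('a::zero)^6)$6 = x6"
  unfolding vector_def by simp_all

lemma "(1::6) \<noteq> 3 \<and> (4::6) \<noteq> 6 \<and> (2::6) \<noteq> 5 \<and> (6::6) \<noteq> 1" by simp

lemma hd_nth: "((\<lambda>y::real^6. y$i) has_derivative (\<lambda>y. y$i)) (at x)"
  by (rule bounded_linear_imp_has_derivative) (rule bounded_linear_vec_nth)




lemma det_reduce:
  fixes A :: "real^6^6"
  assumes r1: "\<And>j. j \<noteq> 1 \<Longrightarrow> A$1$j = 0" and r2: "\<And>j. j \<noteq> 2 \<Longrightarrow> A$2$j = 0"
  shows "det A = sum (\<lambda>p. of_int (sign p) * prod (\<lambda>i. A$i$p i) (UNIV :: 6 set))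
      {p. p permutes {3,4,5,6::6}}"
  unfolding det_def
proof (rule sum.mono_neutral_right)
  show "finite {p. p permutes (UNIV::6 set)}" by (simp add: finite_permutations)
  show "{p. p permutes {3,4,5,6::6}} \<subseteq> {p. p permutes UNIV}"
    using permutes_subset by blast
  show "\<forall>p\<in>{p. p permutes UNIV} - {p. p permutes {3, 4, 5, 6::6}}.
       of_int (sign p) * (\<Prod>i\<in>UNIV. A $ i $ p i) = 0"
  proof
    fix p assume p: "p \<in> {p. p permutes UNIV} - {p. p permutes {3, 4, 5, 6::6}}"
    have "\<exists>i\<in>UNIV. A $ i $ p i = 0"
    proof (rule ccontr)
      assume "\<not> ?thesis"
      then have "p 1 = 1" "p 2 = 2" using r1[of "p 1"] r2[of "p 2"] by auto
      then have "\<forall>x. x \<notin> {3,4,5,6::6} \<longrightarrow> p x = x"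
      proof (intro allI impI)
        fix x :: 6 assume "x \<notin> {3,4,5,6}"
        then have "x = 1 \<or> x = 2" using exhaust_6[of x] by auto
        then show "p x = x" using \<open>p 1 = 1\<close> \<open>p 2 = 2\<close> by auto
      qed
      moreover have "\<forall>y. \<exists>!x. p x = y" using p by (auto simp: permutes_def)
      ultimately have "p permutes {3,4,5,6}" by (simp add: permutes_def)
      with p show False by simp
    qed
    then show "of_int (sign p) * (\<Prod>i\<in>UNIV. A $ i $ p i) = 0"
      by (simp add: prod_zero)
  qed
qed

lemma det4:
  fixes A :: "real^6^6"
  assumes r1: "\<And>j. j \<noteq> 1 \<Longrightarrow> A$1$j = 0" and r2: "\<And>j. j \<noteq> 2 \<Longrightarrow> A$2$j = 0"
  shows "det A = A$1$1 * A$2$2 * (A$3$3 * A$4$4 * A$5$5 * A$6$6 - A$3$3 * A$4$4 * A$5$6 * A$6$5 - A$3$3 * A$4$5 * A$5$4 * A$6$6 + A$3$3 * A$4$5 * A$5$6 * A$6$4 + A$3$3 * A$4$6 * A$5$4 * A$6$5 - A$3$3 * A$4$6 * A$5$5 * A$6$4 - A$3$4 * A$4$3 * A$5$5 * A$6$6 + A$3$4 * A$4$3 * A$5$6 * A$6$5 + A$3$4 * A$4$5 * A$5$3 * A$6$6 - A$3$4 * A$4$5 * A$5$6 * A$6$3 - A$3$4 * A$4$6 * A$5$3 * A$6$5 + A$3$4 * A$4$6 * A$5$5 * A$6$3 + A$3$5 * A$4$3 * A$5$4 * A$6$6 - A$3$5 * A$4$3 * A$5$6 * A$6$4 - A$3$5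 * A$4$4 * A$5$3 * A$6$6 + A$3$5 * A$4$4 * A$5$6 * A$6$3 + A$3$5 * A$4$6 * A$5$3 * A$6$4 - A$3$5 * A$4$6 * A$5$4 * A$6$3 - A$3$6 * A$4$3 * A$5$4 * A$6$5 + A$3$6 * A$4$3 * A$5$5 * A$6$4 + A$3$6 * A$4$4 * A$5$3 * A$6$5 - A$3$6 * A$4$4 * A$5$5 * A$6$3 - A$3$6 * A$4$5 * A$5$3 * A$6$4 + A$3$6 * A$4$5 * A$5$4 * A$6$3)"
proof -
  have f1: "finite {4,5,6::6}" "3 \<notin> {4,5,6::6}" by auto
  have f2: "finite {5,6::6}" "4 \<notin> {5,6::6}" by auto
  have f3: "finite {6::6}" "5 \<notin> {6::6}" by auto
  show ?thesis
    apply (subst det_reduce)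
      apply (simp add: r1)
     apply (simp add: r2)
    apply (subst sum_over_permutations_insert[OF f1])
    apply (subst sum_over_permutations_insert[OF f2])
    apply (subst sum_over_permutations_insert[OF f3])
    apply (simp only: permutes_sing UNIV_6)
    apply (simp add: sign_swap_id permutation_swap_id sign_compose swap_id_eq permutation_compose)
    apply (simp add: algebra_simps)
    done
qed



context fixes a b c tau p J v1 v2 :: real
begin

abbreviation "F \<equiv> im_field a b c tau p J v1 v2"

lemma Fc:
  "F y $ 1 = v1 + a * y$1 + (y$3 / tau + y$5 * y$4)"
  "F y $ 2 = v2 + a * y$2 + (y$4 / tau - y$5 * y$3)"
  "F y $ 3 = - (y$3 / tau + y$5 * y$4) - (a - b) * y$1"
  "F y $ 4 = - (y$4 / tau - y$5 * y$3) - (a - b) * y$2"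
  "F y $ 5 = (c / J) * (- y$1 * y$4 + y$2 * y$3) - (p / J) * y$6"
  "F y $ 6 = 0"
  by (simp_all add: im_field_def Let_def)

lemma hF1: "((\<lambda>y. F y $ 1) has_derivative (\<lambda>v. a * v$1 + v$3 / tau + (v$5 * x$4 + x$5 * v$4))) (at x)"
  unfolding Fc divide_inverse by (auto intro!: derivative_eq_intros hd_nth simp: algebra_simps)
lemma hF2: "((\<lambda>y. F y $ 2) has_derivative (\<lambda>v. a * v$2 + v$4 / tau - (v$5 * x$3 + x$5 * v$3))) (at x)"
  unfolding Fc divide_inverse by (auto intro!: derivative_eq_intros hd_nth simp: algebra_simps)
lemma hF3: "((\<lambda>y. F y $ 3) has_derivative (\<lambda>v. - (v$3 / tau + (v$5 * x$4 + x$5 * v$4)) - (a - b) * v$1)) (at x)"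
  unfolding Fc divide_inverse by (auto intro!: derivative_eq_intros hd_nth simp: algebra_simps)
lemma hF4: "((\<lambda>y. F y $ 4) has_derivative (\<lambda>v. - (v$4 / tau - (v$5 * x$3 + x$5 * v$3)) - (a - b) * v$2)) (at x)"
  unfolding Fc divide_inverse by (auto intro!: derivative_eq_intros hd_nth simp: algebra_simps)
lemma hF5: "((\<lambda>y. F y $ 5) has_derivative (\<lambda>v. (c / J) * (- (v$1 * x$4 + x$1 * v$4) + (v$2 * x$3 + x$2 * v$3)) - (p / J) * v$6)) (at x)"
  unfolding Fc divide_inverse by (auto intro!: derivative_eq_intros hd_nth simp: algebra_simps)

lemma L1: "lie_deriv F out1 = (\<lambda>y. F y $ 1)"
proof
  fix y
  have "frechet_derivative out1 (at y) = (\<lambda>v. v$1)"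
    by (rule frechet_derivative_at[symmetric]) (simp add: out1_def[abs_def] hd_nth)
  then show "lie_deriv F out1 y = F y $ 1" by (simp add: lie_deriv_def)
qed

lemma L2: "lie_deriv F out2 = (\<lambda>y. F y $ 2)"
proof
  fix y
  have "frechet_derivative out2 (at y) = (\<lambda>v. v$2)"
    by (rule frechet_derivative_at[symmetric]) (simp add: out2_def[abs_def] hd_nth)
  then show "lie_deriv F out2 y = F y $ 2" by (simp add: lie_deriv_def)
qed

lemma LL1: "lie_deriv F (lie_deriv F out1) = (\<lambda>y. a * F y$1 + F y$3 / tau + (F y$5 * y$4 + y$5 * F y$4))"
proof
  fix y
  have "frechet_derivative (\<lambda>y. F y $ 1) (at y) = (\<lambda>v. a * v$1 + v$3 / tau + (v$5 * y$4 + y$5 * v$4))"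
    by (rule frechet_derivative_at[symmetric]) (rule hF1)
  then show "lie_deriv F (lie_deriv F out1) y = a * F y$1 + F y$3 / tau + (F y$5 * y$4 + y$5 * F y$4)"
    by (simp add: lie_deriv_def L1)
qed

lemma LL2: "lie_deriv F (lie_deriv F out2) = (\<lambda>y. a * F y$2 + F y$4 / tau - (F y$5 * y$3 + y$5 * F y$3))"
proof
  fix y
  have "frechet_derivative (\<lambda>y. F y $ 2) (at y) = (\<lambda>v. a * v$2 + v$4 / tau - (v$5 * y$3 + y$5 * v$3))"
    by (rule frechet_derivative_at[symmetric]) (rule hF2)
  then show "lie_deriv F (lie_deriv F out2) y = a * F y$2 + F y$4 / tau - (F y$5 * y$3 + y$5 * F y$3)"
    by (simp add: lie_deriv_def L2)
qed

end



lemma grad6_eq: "(h has_derivative D) (at x) \<Longrightarrow> grad6 h x = (\<chi> j. D (axis j 1))"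
  unfolding grad6_def using frechet_derivative_at by metis

context fixes a b c tau p J v1 v2 :: real
begin

lemma hLL1: "((\<lambda>y. a * F a b c tau p J v1 v2 y$1 + F a b c tau p J v1 v2 y$3 / tau
    + (F a b c tau p J v1 v2 y$5 * y$4 + y$5 * F a b c tau p J v1 v2 y$4)) has_derivative
   (\<lambda>v. a * (a * v$1 + v$3 / tau + (v$5 * x$4 + x$5 * v$4))
      + (- (v$3 / tau + (v$5 * x$4 + x$5 * v$4)) - (a - b) * v$1) / tau
      + (((c / J) * (- (v$1 * x$4 + x$1 * v$4) + (v$2 * x$3 + x$2 * v$3)) - (p / J) * v$6) * x$4
         + F a b c tau p J v1 v2 x $5 * v$4
         + (v$5 * F a b c tau p J v1 v2 x $ 4
            + x$5 * (- (v$4 / tau - (v$5 * x$3 + x$5 * v$3)) - (a - b) * v$2))))) (at x)"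
  unfolding divide_inverse[of _ tau]
  by (auto intro!: derivative_eq_intros hd_nth hF1[unfolded divide_inverse[of _ tau]]
      hF3[unfolded divide_inverse[of _ tau]] hF4[unfolded divide_inverse[of _ tau]] hF5
      simp: divide_inverse algebra_simps)


lemma hLL2: "((\<lambda>y. a * F a b c tau p J v1 v2 y$2 + F a b c tau p J v1 v2 y$4 / tau
    - (F a b c tau p J v1 v2 y$5 * y$3 + y$5 * F a b c tau p J v1 v2 y$3)) has_derivative
   (\<lambda>v. a * (a * v$2 + v$4 / tau - (v$5 * x$3 + x$5 * v$3))
      + (- (v$4 / tau - (v$5 * x$3 + x$5 * v$3)) - (a - b) * v$2) / tau
      - (((c / J) * (- (v$1 * x$4 + x$1 * v$4) + (v$2 * x$3 + x$2 * v$3)) - (p / J) * v$6) * x$3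
         + F a b c tau p J v1 v2 x $5 * v$3
         + (v$5 * F a b c tau p J v1 v2 x $ 3
            + x$5 * (- (v$3 / tau + (v$5 * x$4 + x$5 * v$4)) - (a - b) * v$1))))) (at x)"
  unfolding divide_inverse[of _ tau]
  by (auto intro!: derivative_eq_intros hd_nth hF2[unfolded divide_inverse[of _ tau]]
      hF3[unfolded divide_inverse[of _ tau]] hF4[unfolded divide_inverse[of _ tau]] hF5
      simp: divide_inverse algebra_simps)

lemma harc: "((\<lambda>y::real^6. arctan (tau * y$5)) has_derivative (\<lambda>v. tau * v$5 * inverse (1 + (tau * x$5)^2))) (at x)"
  by (auto intro!: derivative_eq_intros hd_nth)

end



lemma e1_alg:
  fixes Q r tau ff :: real
  assumes "Q \<noteq> 0" "tau \<noteq> 0"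
  shows "Q * r / tau^2 * (tau * ff * inverse Q) = inverse tau * ff * r"
  using assms by (simp add: field_simps power2_eq_square)

lemma distr3: "(P::real) * X * (A + B) = P * (X * A) + P * (X * B)"
  by (simp add: distrib_left mult.assoc)

lemma fin_alg:
  fixes r tau w dd ff k p :: real
  assumes "r \<noteq> 0" "tau \<noteq> 0"
  shows "p * k * ((inverse tau ^ 2 + w^2) * dd + inverse tau * ff * r)
     = p * k * ((1 + (tau*w)^2) * r / tau^2) * (tau * ff * inverse (1 + (tau*w)^2) + dd / r)"
proof -
  have q: "1 + (tau*w)^2 \<noteq> 0"
  proof -
    have "0 \<le> (tau*w)^2" by simp
    then show ?thesis by linarith
  qed
  have e1: "(1 + (tau*w)^2) * r / tau^2 * (tau * ff * inverse (1 + (tau*w)^2)) = inverse tau * ff * r"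
    by (rule e1_alg[OF q assms(2)])
  have e2: "(1 + (tau*w)^2) * r / tau^2 * (dd / r) = (inverse tau ^ 2 + w^2) * dd"
    using q assms by (simp add: field_simps power2_eq_square)
  have "p * k * ((1 + (tau*w)^2) * r / tau^2) * (tau * ff * inverse (1 + (tau*w)^2) + dd / r)
     = p * k * ((1 + (tau*w)^2) * r / tau^2 * (tau * ff * inverse (1 + (tau*w)^2)))
       + p * k * ((1 + (tau*w)^2) * r / tau^2 * (dd / r))"
    by (rule distr3)
  also have "\<dots> = p * k * (inverse tau * ff * r) + p * k * ((inverse tau ^ 2 + w^2) * dd)"
    unfolding e1 e2 ..
  finally show ?thesis by (simp only: distrib_left add.commute)
qed

theorem mainTheorem8:
  fixes a b c tau_r p J v1 v2 :: real and x :: "real^6"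
  assumes "tau_r > 0" and "p > 0" and "J > 0"
    and "x$3 \<noteq> 0 \<or> x$4 \<noteq> 0"
  shows "det (obs_matrix (im_field a b c tau_r p J v1 v2) x) \<noteq> 0 \<longleftrightarrow>
         lie_deriv (im_field a b c tau_r p J v1 v2) (\<lambda>y. arctan (tau_r * y$5)) x
           + flux_ang_vel (im_field a b c tau_r p J v1 v2) x \<noteq> 0"
proof -
  let ?F = "im_field a b c tau_r p J v1 v2"
  define G where "G = obs_matrix ?F x"
  have o1: "(out1 has_derivative (\<lambda>v. v$1)) (at x)" by (simp add: out1_def[abs_def] hd_nth)
  have o2: "(out2 has_derivative (\<lambda>v. v$2)) (at x)" by (simp add: out2_def[abs_def] hd_nth)
  have R1: "G $ 1 = (\<chi> j. (axis j 1 :: real^6) $ 1)"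
    unfolding G_def obs_matrix_def using grad6_eq[OF o1] by simp
  have R2: "G $ 2 = (\<chi> j. (axis j 1 :: real^6) $ 2)"
    unfolding G_def obs_matrix_def using grad6_eq[OF o2] by simp
  note R3 = grad6_eq[OF hF1[of a b c tau_r p J v1 v2 x], folded L1]
  note R4 = grad6_eq[OF hF2[of a b c tau_r p J v1 v2 x], folded L2]
  note R5 = grad6_eq[OF hLL1[of a b c tau_r p J v1 v2 x], folded LL1]
  note R6 = grad6_eq[OF hLL2[of a b c tau_r p J v1 v2 x], folded LL2]
  have d: "det G = G$1$1 * G$2$2 * (G$3$3 * G$4$4 * G$5$5 * G$6$6 - G$3$3 * G$4$4 * G$5$6 * G$6$5 - G$3$3 * G$4$5 * G$5$4 * G$6$6 + G$3$3 * G$4$5 * G$5$6 * G$6$4 + G$3$3 * G$4$6 * G$5$4 * G$6$5 - G$3$3 * G$4$6 * G$5$5 * G$6$4 - G$3$4 * G$4$3 * G$5$5 * G$6$6 + G$3$4 * G$4$3 * G$5$6 * G$6$5 + G$3$4 * G$4$5 * G$5$3 * G$6$6 - G$3$4 * G$4$5 * G$5$6 * G$6$3 - G$3$4 * G$4$6 * G$5$3 * G$6$5 + G$3$4 * G$4$6 * G$5$5 * G$6$3 + G$3$5 * G$4$3 * G$5$4 * G$6$6 - G$3$5 * G$4$3 * G$5$6 * G$6$4 - G$3$5 * G$4$4 * G$5$3 * G$6$6 + G$3$5 * G$4$4 * G$5$6 * G$6$3 + G$3$5 * G$4$6 * G$5$3 * G$6$4 - G$3$5 * G$4$6 * G$5$4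 * G$6$3 - G$3$6 * G$4$3 * G$5$4 * G$6$5 + G$3$6 * G$4$3 * G$5$5 * G$6$4 + G$3$6 * G$4$4 * G$5$3 * G$6$5 - G$3$6 * G$4$4 * G$5$5 * G$6$3 - G$3$6 * G$4$5 * G$5$3 * G$6$4 + G$3$6 * G$4$5 * G$5$4 * G$6$3)"
    by (rule det4) (auto simp: R1 R2 axis_def)
  have ent: "G $ 3 = grad6 (lie_deriv ?F out1) x" "G $ 4 = grad6 (lie_deriv ?F out2) x"
    "G $ 5 = grad6 (lie_deriv ?F (lie_deriv ?F out1)) x" "G $ 6 = grad6 (lie_deriv ?F (lie_deriv ?F out2)) x"
    unfolding G_def obs_matrix_def by simp_all
  have arc: "lie_deriv ?F (\<lambda>y. arctan (tau_r * y$5)) x = tau_r * ?F x $ 5 * inverse (1 + (tau_r * x$5)^2)"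
    unfolding lie_deriv_def frechet_derivative_at[OF harc, symmetric] by simp
  have r: "(x$3)^2+(x$4)^2 \<noteq> 0" using assms(4) by (simp add: sum_power2_eq_zero_iff)
  have q: "1 + (tau_r*x$5)^2 \<noteq> 0"
  proof -
    have "0 \<le> (tau_r*x$5)^2" by simp
    then show ?thesis by linarith
  qed
  have t: "tau_r \<noteq> 0" "J \<noteq> 0" using assms by auto
  have eq0: "det G = p * inverse J * ((inverse tau_r ^ 2 + (x$5)^2) * (x$3 * ?F x$4 - x$4 * ?F x$3)
      + inverse tau_r * ?F x$5 * ((x$3)^2 + (x$4)^2))"
    unfolding d
    apply (simp add: R1 R2 ent R3 R4 R5 R6 axis_def divide_inverse)
    apply algebra
    done
  have eq: "det G = (p/J) * ((1+(tau_r*x$5)^2)*((x$3)^2+(x$4)^2)/tau_r^2) *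
     (lie_deriv ?F (\<lambda>y. arctan (tau_r * y$5)) x + flux_ang_vel ?F x)"
    unfolding eq0 arc flux_ang_vel_def divide_inverse[of p J]
    using fin_alg[OF r t(1), where w="x$5" and dd="x$3 * ?F x$4 - x$4 * ?F x$3" and ff="?F x $ 5" and k="inverse J" and p=p] by simp
  have nz: "(p/J) * ((1+(tau_r*x$5)^2)*((x$3)^2+(x$4)^2)/tau_r^2) \<noteq> 0"
    using r q t assms by auto
  show ?thesis
    unfolding G_def[symmetric] eq using nz by simp
qed


end
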